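(* Let $M:\mathbb S\to\mathbb Q_{>0}$ be a recursive positive rational supermartingale for the interval forecast $\{1/2\}$, let $y>0$ be a real number, and let $s\in\mathbb S$ be a situation such that $M(t)\le y$ for every prefix $t$ of $s$ (including $s$ itself and the empty string). Then there is a recursive path $\omega\in\Omega$ with $\omega_{1:|s|}=s$ and $M(\omega_{1:n})\le y$ for all $n\in\mathbb N_0$.
   Context: $\mathcal X=\{0,1\}$, $\Omega=\mathcal X^{\mathbb N}$ (paths), $\mathbb S=\bigcup_{n\ge0}\mathcal X^n$ (finite binary strings), $|s|$ the length, $\omega_{1:n}=(\omega_1,\dots,\omega_n)$. A process $M:\mathbb S\to\mathbb R$ is a supermartingale for $\{1/2\}$ if $\tfrac12M(s1)+\tfrac12M(s0)\le M(s)$ for all $s\in\mathbb S$. $M$ is recursive rational if $s\mapsto M(s)\in\mathbb Q$ is computable by a Turing machine. A path $\omega$ is recursive if $n\mapsto\omega_n$ is computable by a Turing machine. *)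

theory Defs
  imports Complex_Main
begin

text \<open>By the Church-Turing thesis
(Kleene's theorem) these are exactly the total functions computable by a Turing machine.\<close>

inductive recfn :: "nat \<Rightarrow> (nat list \<Rightarrow> nat) \<Rightarrow> bool" where
  rf_zero: "recfn n (\<lambda>xs. 0)"
| rf_succ: "recfn 1 (\<lambda>xs. Suc (hd xs))"
| rf_proj: "i < n \<Longrightarrow> recfn n (\<lambda>xs. xs ! i)"
| rf_comp: "recfn m g \<Longrightarrow> length fs = m \<Longrightarrow> (\<forall>f\<in>set fs. recfn n f)
            \<Longrightarrow> recfn n (\<lambda>xs. g (map (\<lambda>f. f xs) fs))"
| rf_prim: "recfn n g \<Longrightarrow> recfn (Suc (Suc n)) h
            \<Longrightarrow> recfn (Suc n) (\<lambda>xs. rec_nat (g (tl xs)) (\<lambda>k acc. h (k # acc # tl xs)) (hd xs))"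
| rf_min: "recfn (Suc n) g \<Longrightarrow> (\<forall>xs. length xs = n \<longrightarrow> (\<exists>y. g (y # xs) = 0))
            \<Longrightarrow> recfn n (\<lambda>xs. LEAST y. g (y # xs) = 0)"

definition computable :: "(nat \<Rightarrow> nat) \<Rightarrow> bool" where
  "computable f \<longleftrightarrow> (\<exists>g. recfn 1 g \<and> (\<forall>x. g [x] = f x))"

text \<open>Finite binary strings are bool lists (True = 1), new symbols appended at the end.
A path \<omega> is a function nat \<Rightarrow> bool, \<omega> i standing for \<omega>_(i+1).\<close>

definition prefix_of :: "(nat \<Rightarrow> bool) \<Rightarrow> nat \<Rightarrow> bool list" where
  "prefix_of \<omega> n = map \<omega> [0..<n]"

fun enc_str :: "bool list \<Rightarrow> nat" where
  "enc_str [] = 0"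
| "enc_str (b # bs) = 2 * enc_str bs + (if b then 2 else 1)"

definition recursive_path :: "(nat \<Rightarrow> bool) \<Rightarrow> bool" where
  "recursive_path \<omega> \<longleftrightarrow> computable (\<lambda>n. if \<omega> n then 1 else 0)"

definition recursive_rational :: "(bool list \<Rightarrow> real) \<Rightarrow> bool" where
  "recursive_rational M \<longleftrightarrow>
     (\<exists>p q d. computable p \<and> computable q \<and> computable d \<and>
        (\<forall>s. d (enc_str s) > 0 \<and>
             M s = (real (p (enc_str s)) - real (q (enc_str s))) / real (d (enc_str s))))"

definition supermartingale_half :: "(bool list \<Rightarrow> real) \<Rightarrow> bool" where
  "supermartingale_half M \<longleftrightarrow>
     (\<forall>s. (1/2) * M (s @ [True]) + (1/2) * M (s @ [False]) \<le> M s)"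

end

theory Submission
  imports Defs
begin

definition rc :: "nat \<Rightarrow> (nat list \<Rightarrow> nat) \<Rightarrow> bool" where
  "rc k F \<longleftrightarrow> (\<exists>g. recfn k g \<and> (\<forall>xs. length xs = k \<longrightarrow> g xs = F xs))"

lemma rc_cong: "rc k F \<Longrightarrow> (\<And>xs. length xs = k \<Longrightarrow> F xs = G xs) \<Longrightarrow> rc k G"
  unfolding rc_def by metis

lemma rc_cong': "rc k F \<Longrightarrow> k = k' \<Longrightarrow> (\<And>xs. length xs = k' \<Longrightarrow> F xs = G xs) \<Longrightarrow> rc k' G"
  unfolding rc_def by metis

lemma rc_zero: "rc k (\<lambda>_. 0)"
  unfolding rc_def using rf_zero by blast

lemma rc_proj: "i < k \<Longrightarrow> rc k (\<lambda>xs. xs ! i)"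
  unfolding rc_def using rf_proj by blast

lemma rc_succ1: "rc 1 (\<lambda>xs. Suc (xs ! 0))"
  unfolding rc_def
proof (intro exI conjI allI impI)
  show "recfn 1 (\<lambda>xs. Suc (hd xs))" by (rule rf_succ)
  fix xs :: "nat list" assume "length xs = 1"
  then show "Suc (hd xs) = Suc (xs ! 0)" by (cases xs) auto
qed

lemma rc_list_choice:
  assumes "\<forall>F\<in>set Fs. rc n F"
  shows "\<exists>gs. length gs = length Fs \<and> (\<forall>g\<in>set gs. recfn n g) \<and>
     (\<forall>xs. length xs = n \<longrightarrow> map (\<lambda>g. g xs) gs = map (\<lambda>F. F xs) Fs)"
  using assms
proof (induction Fs)
  case Nil
  then show ?case by auto
next
  case (Cons F Fs)
  then obtain gs where gs: "length gs = length Fs" "\<forall>g\<in>set gs. recfn n g"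
     "\<forall>xs. length xs = n \<longrightarrow> map (\<lambda>g. g xs) gs = map (\<lambda>F. F xs) Fs" by auto
  from Cons.prems obtain g where g: "recfn n g" "\<forall>xs. length xs = n \<longrightarrow> g xs = F xs"
    unfolding rc_def by auto
  show ?case
    by (rule exI[of _ "g # gs"]) (use gs g in auto)
qed

lemma rc_comp:
  assumes "rc m G" "length Fs = m" "\<forall>F\<in>set Fs. rc n F"
  shows "rc n (\<lambda>xs. G (map (\<lambda>F. F xs) Fs))"
proof -
  obtain g where g: "recfn m g" "\<forall>xs. length xs = m \<longrightarrow> g xs = G xs"
    using assms(1) unfolding rc_def by auto
  obtain gs where gs: "length gs = length Fs" "\<forall>g\<in>set gs. recfn n g"
     "\<forall>xs. length xs = n \<longrightarrow> map (\<lambda>g. g xs) gs = map (\<lambda>F. F xs) Fs"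
    using rc_list_choice[OF assms(3)] by auto
  have "recfn n (\<lambda>xs. g (map (\<lambda>f. f xs) gs))"
    by (rule rf_comp) (use g gs assms in auto)
  moreover have "\<forall>xs. length xs = n \<longrightarrow> g (map (\<lambda>f. f xs) gs) = G (map (\<lambda>F. F xs) Fs)"
    using g gs assms by auto
  ultimately show ?thesis unfolding rc_def by blast
qed

lemma rc_prim:
  assumes "rc n g" "rc (Suc (Suc n)) h"
  shows "rc (Suc n) (\<lambda>xs. rec_nat (g (tl xs)) (\<lambda>k acc. h (k # acc # tl xs)) (hd xs))"
proof -
  obtain g' where g': "recfn n g'" "\<forall>xs. length xs = n \<longrightarrow> g' xs = g xs"
    using assms(1) unfolding rc_def by auto
  obtain h' where h': "recfn (Suc (Suc n)) h'" "\<forall>xs. length xs = Suc (Suc n) \<longrightarrow> h' xs = h xs"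
    using assms(2) unfolding rc_def by auto
  have "recfn (Suc n) (\<lambda>xs. rec_nat (g' (tl xs)) (\<lambda>k acc. h' (k # acc # tl xs)) (hd xs))"
    by (rule rf_prim) (use g' h' in auto)
  moreover have "\<forall>xs. length xs = Suc n \<longrightarrow>
      rec_nat (g' (tl xs)) (\<lambda>k acc. h' (k # acc # tl xs)) (hd xs) =
      rec_nat (g (tl xs)) (\<lambda>k acc. h (k # acc # tl xs)) (hd xs)"
  proof (intro allI impI)
    fix xs :: "nat list" assume len: "length xs = Suc n"
    have "rec_nat (g' (tl xs)) (\<lambda>k acc. h' (k # acc # tl xs)) m =
      rec_nat (g (tl xs)) (\<lambda>k acc. h (k # acc # tl xs)) m" for m
      by (induction m) (use g' h' len in auto)
    then show "rec_nat (g' (tl xs)) (\<lambda>k acc. h' (k # acc # tl xs)) (hd xs) =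
      rec_nat (g (tl xs)) (\<lambda>k acc. h (k # acc # tl xs)) (hd xs)" by blast
  qed
  ultimately show ?thesis unfolding rc_def by blast
qed

lemma len1: "length xs = Suc 0 \<Longrightarrow> \<exists>a. xs = [a]"
  by (cases xs) auto
lemma len2: "length xs = Suc (Suc 0) \<Longrightarrow> \<exists>a b. xs = [a, b]"
  by (cases xs; cases "tl xs") auto
lemma len1': "length xs = 1 \<Longrightarrow> \<exists>a. xs = [a]"
  by (cases xs) auto
lemma len2': "length xs = 2 \<Longrightarrow> \<exists>a b. xs = [a, b]"
  by (cases xs; cases "tl xs") (auto simp: numeral_2_eq_2)
lemma len3: "length xs = Suc (Suc (Suc 0)) \<Longrightarrow> \<exists>a b c. xs = [a, b, c]"
  by (cases xs; cases "tl xs"; cases "tl (tl xs)") auto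

lemma rc_comp1: "rc 1 G \<Longrightarrow> rc n F \<Longrightarrow> rc n (\<lambda>xs. G [F xs])"
  using rc_comp[of 1 G "[F]" n] by auto
lemma rc_comp2: "rc 2 G \<Longrightarrow> rc n F1 \<Longrightarrow> rc n F2 \<Longrightarrow> rc n (\<lambda>xs. G [F1 xs, F2 xs])"
  using rc_comp[of 2 G "[F1, F2]" n] by auto
lemma rc_comp0: "rc 0 G \<Longrightarrow> rc n (\<lambda>xs. G [])"
  using rc_comp[of 0 G "[]" n] by auto

definition op1 :: "(nat \<Rightarrow> nat) \<Rightarrow> bool" where "op1 f \<longleftrightarrow> rc 1 (\<lambda>xs. f (xs ! 0))"
definition op2 :: "(nat \<Rightarrow> nat \<Rightarrow> nat) \<Rightarrow> bool" where "op2 f \<longleftrightarrow> rc 2 (\<lambda>xs. f (xs ! 0) (xs ! 1))"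

lemma rc_op1: "op1 f \<Longrightarrow> rc n F \<Longrightarrow> rc n (\<lambda>xs. f (F xs))"
  unfolding op1_def using rc_comp1 by fastforce
lemma rc_op2: "op2 f \<Longrightarrow> rc n F \<Longrightarrow> rc n G \<Longrightarrow> rc n (\<lambda>xs. f (F xs) (G xs))"
  unfolding op2_def using rc_comp2[of "\<lambda>xs. f (xs ! 0) (xs ! 1)" n F G] by simp

lemma rc_Suc: "rc n F \<Longrightarrow> rc n (\<lambda>xs. Suc (F xs))"
  using rc_op1[of Suc n F] rc_succ1 unfolding op1_def by simp

lemma rc_const: "rc n (\<lambda>xs. c)"
  by (induction c) (auto intro: rc_zero rc_Suc)

lemma computable_op1: "computable f \<longleftrightarrow> op1 f"
  unfolding computable_def op1_def rc_def
proof
  assume "\<exists>g. recfn 1 g \<and> (\<forall>x. g [x] = f x)"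
  then obtain g where "recfn 1 g" "\<forall>x. g [x] = f x" by auto
  then show "\<exists>g. recfn 1 g \<and> (\<forall>xs. length xs = 1 \<longrightarrow> g xs = f (xs ! 0))"
    by (metis One_nat_def len1 nth_Cons_0)
next
  assume "\<exists>g. recfn 1 g \<and> (\<forall>xs. length xs = 1 \<longrightarrow> g xs = f (xs ! 0))"
  then show "\<exists>g. recfn 1 g \<and> (\<forall>x. g [x] = f x)" by fastforce
qed

lemma op2_add: "op2 (+)"
proof -
  have "rc (Suc 1) (\<lambda>xs. rec_nat ((\<lambda>ys. ys ! 0) (tl xs)) (\<lambda>k acc. (\<lambda>ys. Suc (ys ! 1)) (k # acc # tl xs)) (hd xs))"
    by (rule rc_prim) (auto intro!: rc_proj rc_Suc)
  moreover have B: "rec_nat b (\<lambda>k acc. Suc acc) a = a + b" for a b :: nat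
    by (induction a) auto
  ultimately show ?thesis unfolding op2_def
    by - (erule rc_cong', simp, auto dest!: len2 len2' simp: B)
qed

lemma rc_add: "rc n F \<Longrightarrow> rc n G \<Longrightarrow> rc n (\<lambda>xs. F xs + G xs)"
  using rc_op2[OF op2_add] .

lemma op2_mult: "op2 (*)"
proof -
  have "rc (Suc 1) (\<lambda>xs. rec_nat ((\<lambda>ys. 0) (tl xs)) (\<lambda>k acc. (\<lambda>ys. ys ! 1 + ys ! 2) (k # acc # tl xs)) (hd xs))"
    by (rule rc_prim) (auto intro!: rc_proj rc_add rc_zero)
  moreover have B: "rec_nat 0 (\<lambda>k acc. acc + b) a = a * b" for a b :: nat
    by (induction a) auto
  ultimately show ?thesis unfolding op2_def
    by - (erule rc_cong', simp, auto dest!: len2 len2' simp: B)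
qed

lemma rc_mult: "rc n F \<Longrightarrow> rc n G \<Longrightarrow> rc n (\<lambda>xs. F xs * G xs)"
  using rc_op2[OF op2_mult] .

lemma op1_pred: "op1 (\<lambda>a. a - 1)"
proof -
  have "rc (Suc 0) (\<lambda>xs. rec_nat ((\<lambda>ys. 0) (tl xs)) (\<lambda>k acc. (\<lambda>ys. ys ! 0) (k # acc # tl xs)) (hd xs))"
    by (rule rc_prim) (auto intro!: rc_proj rc_zero)
  moreover have B: "rec_nat 0 (\<lambda>k acc. k) a = a - 1" for a :: nat
    by (induction a) auto
  ultimately show ?thesis unfolding op1_def
    by - (erule rc_cong', simp, auto dest!: len1 len1' simp: B)
qed

lemma op2_sub: "op2 (-)"
proof -
  have "rc (Suc 1) (\<lambda>xs. rec_nat ((\<lambda>ys. ys ! 0) (tl xs)) (\<lambda>k acc. (\<lambda>ys. ys ! 1 - 1) (k # acc # tl xs)) (hd xs))"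
    by (rule rc_prim) (intro rc_proj rc_op1[OF op1_pred]; simp)+
  then have "rc 2 (\<lambda>xs. rec_nat (xs ! 1) (\<lambda>k acc. acc - 1) (xs ! 0))"
    by - (erule rc_cong', simp, auto dest!: len2')
  then have "rc 2 (\<lambda>xs. (\<lambda>xs. rec_nat (xs ! 1) (\<lambda>k acc. acc - 1) (xs ! 0)) [xs ! 1, xs ! 0])"
    by (rule rc_comp2) (auto intro: rc_proj)
  moreover have B: "rec_nat a (\<lambda>k acc. acc - 1) b = a - b" for a b :: nat
    by (induction b) auto
  ultimately show ?thesis unfolding op2_def
    by - (erule rc_cong', simp, auto dest!: len2 len2' simp: B)
qed

lemma rc_sub: "rc n F \<Longrightarrow> rc n G \<Longrightarrow> rc n (\<lambda>xs. F xs - G xs)"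
  using rc_op2[OF op2_sub] .

lemma rc_le: "rc n F \<Longrightarrow> rc n G \<Longrightarrow> rc n (\<lambda>xs. if F xs \<le> G xs then 1 else 0)"
proof -
  assume "rc n F" "rc n G"
  then have "rc n (\<lambda>xs. 1 - (F xs - G xs))" by (intro rc_sub rc_const)
  then show ?thesis by (rule rc_cong) auto
qed

lemma op1_pow2: "op1 (\<lambda>a. (2::nat) ^ a)"
proof -
  have "rc (Suc 0) (\<lambda>xs. rec_nat ((\<lambda>ys. 1) (tl xs)) (\<lambda>k acc. (\<lambda>ys. ys ! 1 + ys ! 1) (k # acc # tl xs)) (hd xs))"
    by (rule rc_prim) (auto intro!: rc_proj rc_const rc_add)
  moreover have B: "rec_nat 1 (\<lambda>k acc. acc + acc) a = (2::nat) ^ a" for a :: nat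
    by (induction a) auto
  ultimately show ?thesis unfolding op1_def
    by - (erule rc_cong', simp, auto dest!: len1 len1' simp: B)
qed

lemma rc_pow2: "rc n F \<Longrightarrow> rc n (\<lambda>xs. 2 ^ F xs)"
  using rc_op1[OF op1_pow2] .

lemma rc_fun: "computable f \<Longrightarrow> rc n F \<Longrightarrow> rc n (\<lambda>xs. f (F xs))"
  using rc_op1 computable_op1 by blast

lemma op1_table: "op1 (\<lambda>n. if n < length bs then (if bs ! n then 1 else 0) else 0)"
proof (induction bs)
  case Nil
  then show ?case unfolding op1_def by (simp add: rc_zero)
next
  case (Cons b bs)
  have "rc (Suc 0) (\<lambda>xs. rec_nat ((\<lambda>ys. if b then 1 else 0) (tl xs))
     (\<lambda>k acc. (\<lambda>ys. (if ys ! 0 < length bs then (if bs ! (ys ! 0) then 1 else 0) else 0)) (k # acc # tl xs)) (hd xs))"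
    by (rule rc_prim) (auto intro!: rc_proj rc_const rc_op1[OF Cons.IH])
  moreover have B: "rec_nat (if b then 1 else 0) (\<lambda>k acc. (if k < length bs then (if bs ! k then 1 else 0) else 0)) a
     = (if a < length (b # bs) then (if (b # bs) ! a then 1 else 0) else 0)" for a :: nat
    by (cases a) auto
  ultimately show ?case unfolding op1_def
  proof (elim rc_cong')
    fix xs :: "nat list" assume "length xs = 1"
    then obtain a where xs: "xs = [a]" using len1' by blast
    show "rec_nat ((\<lambda>ys. if b then 1 else 0) (tl xs))
     (\<lambda>k acc. (\<lambda>ys. (if ys ! 0 < length bs then (if bs ! (ys ! 0) then 1 else 0) else 0)) (k # acc # tl xs)) (hd xs)
     = (if xs ! 0 < length (b # bs) then (if (b # bs) ! (xs ! 0) then 1 else 0) else 0)"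
      unfolding xs by (cases a) auto
  qed simp
qed


lemma enc_snoc: "enc_str (xs @ [b]) = enc_str xs + 2 ^ length xs * (if b then 2 else 1)"
  by (induction xs) auto

lemma prefix_Suc: "prefix_of w (Suc n) = prefix_of w n @ [w n]"
  unfolding prefix_of_def by simp

lemma prefix_len[simp]: "length (prefix_of w n) = n"
  unfolding prefix_of_def by simp

lemma frac_le: fixes a b a' b' e e' :: real assumes "e > 0" "e' > 0"
  shows "(a - b) / e \<le> (a' - b') / e' \<longleftrightarrow> a * e' + b' * e \<le> a' * e + b * e'"
  using assms by (simp add: divide_simps algebra_simps)

theorem lemma7:
  fixes M :: "bool list \<Rightarrow> real" and y :: real and s :: "bool list"
  assumes "recursive_rational M"
    and "\<forall>t. M t > 0"
    and "supermartingale_half M"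
    and "y > 0"
    and "\<forall>n\<le>length s. M (take n s) \<le> y"
  shows "\<exists>\<omega>. recursive_path \<omega> \<and> prefix_of \<omega> (length s) = s \<and>
             (\<forall>n. M (prefix_of \<omega> n) \<le> y)"
proof -
  obtain p q d where cp: "computable p" and cq: "computable q" and cd: "computable d"
    and pqd: "\<forall>s. d (enc_str s) > 0 \<and>
             M s = (real (p (enc_str s)) - real (q (enc_str s))) / real (d (enc_str s))"
    using assms(1) unfolding recursive_rational_def by blast
  define L where "L = length s"
  define T where "T = (\<lambda>n::nat. if n < L then (if s ! n then 1 else 0) else (0::nat))"
  define ch where "ch = (\<lambda>n x::nat. if p (x+2^n+2^n) * d (x+2^n) + q (x+2^n) * d (x+2^n+2^n)
      \<le> p (x+2^n) * d (x+2^n+2^n) + q (x+2^n+2^n) * d (x+2^n) then 1 else (0::nat))"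
  define bit where "bit = (\<lambda>n x. T n + (1 - (if Suc n \<le> L then 1 else 0)) * ch n x)"
  define c where "c = (\<lambda>n. rec_nat 0 (\<lambda>k acc. acc + 2^k * (1 + bit k acc)) n)"
  define w where "w = (\<lambda>n. bit n (c n) = 1)"
  have bit01: "bit n x = 1 \<or> bit n x = 0" for n x
    unfolding bit_def T_def ch_def by auto
  have bit_lt: "n < L \<Longrightarrow> bit n x = (if s ! n then 1 else 0)" for n x
    unfolding bit_def T_def by auto
  have bit_ge: "L \<le> n \<Longrightarrow> bit n x = ch n x" for n x
    unfolding bit_def T_def by auto
  have code: "enc_str (prefix_of w n) = c n" for n
  proof (induction n)
    case 0
    then show ?case by (simp add: prefix_of_def c_def)
  next
    case (Suc n)
    have "(if w n then 2 else 1) = 1 + bit n (c n)"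
      using bit01[of n "c n"] unfolding w_def by auto
    then show ?case using Suc by (simp add: prefix_Suc enc_snoc c_def)
  qed
  have take_eq: "n \<le> L \<Longrightarrow> prefix_of w n = take n s" for n
    by (rule nth_equalityI) (auto simp: prefix_of_def L_def w_def bit_lt)
  have ch_ok: "ch n (enc_str t) = 1 \<longleftrightarrow> M (t @ [True]) \<le> M (t @ [False])"
    if "length t = n" for t n
  proof -
    define x where "x = enc_str t"
    have e1: "enc_str (t @ [True]) = x + 2^n + 2^n" and e0: "enc_str (t @ [False]) = x + 2^n"
      using that by (simp_all add: enc_snoc x_def)
    have d1: "real (d (x + 2^n + 2^n)) > 0" and d0: "real (d (x + 2^n)) > 0"
      using pqd[rule_format, of "t @ [True]"] pqd[rule_format, of "t @ [False]"] e1 e0 by auto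
    have "ch n x = 1 \<longleftrightarrow> real (p (x+2^n+2^n) * d (x+2^n) + q (x+2^n) * d (x+2^n+2^n))
      \<le> real (p (x+2^n) * d (x+2^n+2^n) + q (x+2^n+2^n) * d (x+2^n))"
      unfolding ch_def by (simp only: of_nat_le_iff) simp
    also have "\<dots> \<longleftrightarrow> M (t @ [True]) \<le> M (t @ [False])"
      using pqd[rule_format, of "t @ [True]"] pqd[rule_format, of "t @ [False]"] e1 e0
        frac_le[OF d1 d0] by simp
    finally show ?thesis unfolding x_def .
  qed
  have bound: "M (prefix_of w n) \<le> y" for n
  proof (induction n)
    case 0
    then show ?case using take_eq[of 0] assms(5) by auto
  next
    case (Suc n)
    show ?case
    proof (cases "Suc n \<le> L")
      case True
      then show ?thesis using take_eq[of "Suc n"] assms(5) L_def by auto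
    next
      case False
      define t where "t = prefix_of w n"
      have wn: "w n \<longleftrightarrow> M (t @ [True]) \<le> M (t @ [False])"
        using False ch_ok[of t n] bit_ge[of n] code[of n] unfolding w_def t_def by auto
      have "(1/2) * M (t @ [True]) + (1/2) * M (t @ [False]) \<le> M t"
        using assms(3) unfolding supermartingale_half_def by blast
      then have "M (t @ [w n]) \<le> M t" using wn by auto
      then show ?thesis using Suc t_def by (simp add: prefix_Suc)
    qed
  qed
  have rcT: "rc n (\<lambda>xs. T (F xs))" if "rc n F" for n F
    using rc_op1[OF op1_table[of s] that] unfolding T_def L_def .
  have rc_ch: "rc 2 (\<lambda>xs. ch (xs ! 0) (xs ! 1))"
    unfolding ch_def
    by (intro rc_le rc_add rc_mult rc_fun[OF cp] rc_fun[OF cq] rc_fun[OF cd] rc_pow2 rc_proj) auto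
  have rc_bit: "rc 2 (\<lambda>xs. bit (xs ! 0) (xs ! 1))"
    unfolding bit_def
    by (intro rc_add rcT rc_mult rc_sub rc_le rc_const rc_ch rc_Suc rc_proj) auto
  have "rc (Suc 0) (\<lambda>xs. rec_nat ((\<lambda>ys. 0) (tl xs))
     (\<lambda>k acc. (\<lambda>ys. ys ! 1 + 2 ^ (ys ! 0) * (1 + bit (ys ! 0) (ys ! 1))) (k # acc # tl xs)) (hd xs))"
    by (rule rc_prim) (intro rc_zero rc_add rc_proj rc_mult rc_pow2 rc_const
        rc_comp2[OF rc_bit, of _ "\<lambda>ys. ys ! 0" "\<lambda>ys. ys ! 1", simplified]; simp)+
  then have rc_c: "rc 1 (\<lambda>xs. c (xs ! 0))"
    by - (erule rc_cong', simp, auto dest!: len1 len1' simp: c_def)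
  have "rc 1 (\<lambda>xs. bit (xs ! 0) (c (xs ! 0)))"
    using rc_comp2[OF rc_bit, of 1 "\<lambda>xs. xs ! 0" "\<lambda>xs. c (xs ! 0)"] rc_c rc_proj[of 0 1] by simp
  then have "computable (\<lambda>n. bit n (c n))"
    unfolding computable_op1 op1_def .
  moreover have "(\<lambda>n. if w n then 1 else 0) = (\<lambda>n. bit n (c n))"
    using bit01 unfolding w_def by (auto intro!: ext) (metis zero_neq_one)
  ultimately have "recursive_path w" unfolding recursive_path_def by simp
  moreover have "prefix_of w (length s) = s" using take_eq[of L] L_def by simp
  ultimately show ?thesis using bound by blast
qed

end
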